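(* Let $\Sigma\cong\mathbb R^{10}$ have coordinates $(a_1,a_2,a_3,a_4,\alpha_1,\alpha_2,\alpha_3,\beta_1,\beta_2,\gamma)$, and consider the vector fields $$\mathbf V_1=-\alpha_1\partial_{a_2}-\alpha_2\partial_{a_3}+3\alpha_3\partial_{a_4}-2\beta_1\partial_{\alpha_2}+2\beta_2\partial_{\alpha_3}-\gamma\partial_{\beta_2},$$ $$\mathbf V_2=3\alpha_1\partial_{a_1}+\alpha_2\partial_{a_2}-\alpha_3\partial_{a_3}+2\beta_1\partial_{\alpha_1}+2\beta_2\partial_{\alpha_2}+\gamma\partial_{\beta_1},$$ $$\mathbf V_3=3a_2\partial_{a_1}+(2a_3-a_1)\partial_{a_2}+(a_4-2a_2)\partial_{a_3}-3a_3\partial_{a_4}+\alpha_2\partial_{\alpha_1}-2(\alpha_1+\alpha_3)\partial_{\alpha_2}+\alpha_2\partial_{\alpha_3}+\beta_2\partial_{\beta_1}-\beta_1\partial_{\beta_2},$$ $$\mathbf T_1=3\partial_{a_1}+\partial_{a_3},\qquad \mathbf T_2=\partial_{a_2}+3\partial_{a_4},\qquad \mathbf T_3=\partial_{\alpha_1}-\partial_{\alpha_3}.$$ Define the polynomials $\tilde I_1=\gamma\alpha_2-2\beta_1\beta_2$, $\tilde I_2=\gamma(\alpha_1+\alpha_3)+\beta_2^2-\beta_1^2$, $\tilde I_3=\gamma^2(a_1-3a_3)+3\gamma(\beta_2\alpha_2-\beta_1(\alpha_1+\alpha_3))+2\beta_1(\beta_1^2-3\beta_2^2)$, $\tilde I_4=\gamma^2(3a_2-a_4)-3\gamma(\beta_1\alpha_2+\beta_2(\alpha_1+\alpha_3))+2\beta_2(3\beta_1^2-\beta_2^2)$,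 and $I_1=2(\tilde I_1^2-3\tilde I_2^2)\tilde I_1\tilde I_3\tilde I_4+(3\tilde I_1^2-\tilde I_2^2)\tilde I_2(\tilde I_3^2-\tilde I_4^2)$, $I_2=\tilde I_1^2+\tilde I_2^2$, $I_3=\tilde I_3^2+\tilde I_4^2$, $I_4=\gamma$. Then $\tilde I_1,\dots,\tilde I_4,\gamma$ are annihilated by $\mathbf T_1,\mathbf T_2,\mathbf T_3,\mathbf V_1,\mathbf V_2$, and $I_1,I_2,I_3,I_4$ are homogeneous polynomials on $\Sigma$ annihilated by all six vector fields $\mathbf V_1,\mathbf V_2,\mathbf V_3,\mathbf T_1,\mathbf T_2,\mathbf T_3$.
   Context: Interpretation: points of $\Sigma$ parametrize Killing tensors $\mathbf L$ of valence three of the Euclidean plane via the Cartesian components $L^{111}=a_1+3\alpha_1y+3\beta_1y^2+\gamma y^3$, $L^{112}=a_2+\alpha_2y-\alpha_1x-2\beta_1xy+\beta_2y^2-\gamma xy^2$, $L^{122}=a_3-\alpha_2x-\alpha_3y-2\beta_2xy+\beta_1x^2+\gamma yx^2$, $L^{222}=a_4+3\alpha_3x+3\beta_2x^2-\gamma x^3$. $\mathbf V_1,\mathbf V_2,\mathbf V_3$ are the infinitesimal generators of the action induced on $\Sigma$ by the Euclidean isometry group (translations in $x$, $y$ and rotation), and $\mathbf T_1,\mathbf T_2,\mathbf T_3$ span the tangent directions of the subspace of trivial Killing tensors $\mathbf g\odot\mathbf X$ ($\mathbf X$ a Killing vector). Functions annihilated by all six fields are the isometry-group invariants of non-trivial valence-three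 Killing tensors. *)

theory Defs
  imports "HOL-Analysis.Analysis"
begin

type_synonym pt = "real^10"

definition ca1 :: "pt \<Rightarrow> real" where "ca1 p = p $ 0"
definition ca2 :: "pt \<Rightarrow> real" where "ca2 p = p $ 1"
definition ca3 :: "pt \<Rightarrow> real" where "ca3 p = p $ 2"
definition ca4 :: "pt \<Rightarrow> real" where "ca4 p = p $ 3"
definition cal1 :: "pt \<Rightarrow> real" where "cal1 p = p $ 4"
definition cal2 :: "pt \<Rightarrow> real" where "cal2 p = p $ 5"
definition cal3 :: "pt \<Rightarrow> real" where "cal3 p = p $ 6"
definition cb1 :: "pt \<Rightarrow> real" where "cb1 p = p $ 7"
definition cb2 :: "pt \<Rightarrow> real" where "cb2 p = p $ 8"
definition cg :: "pt \<Rightarrow> real" where "cg p = p $ 9"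

definition d_a1 :: pt where "d_a1 = axis 0 1"
definition d_a2 :: pt where "d_a2 = axis 1 1"
definition d_a3 :: pt where "d_a3 = axis 2 1"
definition d_a4 :: pt where "d_a4 = axis 3 1"
definition d_al1 :: pt where "d_al1 = axis 4 1"
definition d_al2 :: pt where "d_al2 = axis 5 1"
definition d_al3 :: pt where "d_al3 = axis 6 1"
definition d_b1 :: pt where "d_b1 = axis 7 1"
definition d_b2 :: pt where "d_b2 = axis 8 1"
definition d_g :: pt where "d_g = axis 9 1"

definition V1 :: "pt \<Rightarrow> pt" where
  "V1 p = (- cal1 p) *\<^sub>R d_a2 + (- cal2 p) *\<^sub>R d_a3 + (3 * cal3 p) *\<^sub>R d_a4
        + (-2 * cb1 p) *\<^sub>R d_al2 + (2 * cb2 p) *\<^sub>R d_al3 + (- cg p) *\<^sub>R d_b2"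

definition V2 :: "pt \<Rightarrow> pt" where
  "V2 p = (3 * cal1 p) *\<^sub>R d_a1 + cal2 p *\<^sub>R d_a2 + (- cal3 p) *\<^sub>R d_a3
        + (2 * cb1 p) *\<^sub>R d_al1 + (2 * cb2 p) *\<^sub>R d_al2 + cg p *\<^sub>R d_b1"

definition V3 :: "pt \<Rightarrow> pt" where
  "V3 p = (3 * ca2 p) *\<^sub>R d_a1 + (2 * ca3 p - ca1 p) *\<^sub>R d_a2
        + (ca4 p - 2 * ca2 p) *\<^sub>R d_a3 + (-3 * ca3 p) *\<^sub>R d_a4
        + cal2 p *\<^sub>R d_al1 + (-2 * (cal1 p + cal3 p)) *\<^sub>R d_al2 + cal2 p *\<^sub>R d_al3
        + cb2 p *\<^sub>R d_b1 + (- cb1 p) *\<^sub>R d_b2"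

definition T1 :: "pt \<Rightarrow> pt" where "T1 p = 3 *\<^sub>R d_a1 + d_a3"
definition T2 :: "pt \<Rightarrow> pt" where "T2 p = d_a2 + 3 *\<^sub>R d_a4"
definition T3 :: "pt \<Rightarrow> pt" where "T3 p = d_al1 - d_al3"

definition annihilates :: "(pt \<Rightarrow> pt) \<Rightarrow> (pt \<Rightarrow> real) \<Rightarrow> bool" where
  "annihilates X f \<longleftrightarrow> (\<forall>p. \<exists>D. (f has_derivative D) (at p) \<and> D (X p) = 0)"

inductive poly_fun :: "(pt \<Rightarrow> real) \<Rightarrow> bool" where
  const: "poly_fun (\<lambda>p. c)"
| coord: "poly_fun (\<lambda>p. p $ i)"
| add: "poly_fun f \<Longrightarrow> poly_fun g \<Longrightarrow> poly_fun (\<lambda>p. f p + g p)"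
| mult: "poly_fun f \<Longrightarrow> poly_fun g \<Longrightarrow> poly_fun (\<lambda>p. f p * g p)"

definition homogeneous :: "(pt \<Rightarrow> real) \<Rightarrow> bool" where
  "homogeneous f \<longleftrightarrow> (\<exists>d::nat. \<forall>t p. f (t *\<^sub>R p) = t ^ d * f p)"

definition It1 :: "pt \<Rightarrow> real" where
  "It1 p = cg p * cal2 p - 2 * cb1 p * cb2 p"
definition It2 :: "pt \<Rightarrow> real" where
  "It2 p = cg p * (cal1 p + cal3 p) + (cb2 p)^2 - (cb1 p)^2"
definition It3 :: "pt \<Rightarrow> real" where
  "It3 p = (cg p)^2 * (ca1 p - 3 * ca3 p)
          + 3 * cg p * (cb2 p * cal2 p - cb1 p * (cal1 p + cal3 p))
          + 2 * cb1 p * ((cb1 p)^2 - 3 * (cb2 p)^2)"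
definition It4 :: "pt \<Rightarrow> real" where
  "It4 p = (cg p)^2 * (3 * ca2 p - ca4 p)
          - 3 * cg p * (cb1 p * cal2 p + cb2 p * (cal1 p + cal3 p))
          + 2 * cb2 p * (3 * (cb1 p)^2 - (cb2 p)^2)"

definition I1 :: "pt \<Rightarrow> real" where
  "I1 p = 2 * ((It1 p)^2 - 3 * (It2 p)^2) * It1 p * It3 p * It4 p
        + (3 * (It1 p)^2 - (It2 p)^2) * It2 p * ((It3 p)^2 - (It4 p)^2)"
definition I2 :: "pt \<Rightarrow> real" where "I2 p = (It1 p)^2 + (It2 p)^2"
definition I3 :: "pt \<Rightarrow> real" where "I3 p = (It3 p)^2 + (It4 p)^2"
definition I4 :: "pt \<Rightarrow> real" where "I4 p = cg p"

end

theory Submission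
  imports Defs
begin
lemma cd: "((\<lambda>p::pt. p $ i) has_derivative (\<lambda>h. h $ i)) (at p)"
  by (rule bounded_linear_imp_has_derivative) (simp add: bounded_linear_vec_nth)
lemmas cdefs = ca1_def ca2_def ca3_def ca4_def cal1_def cal2_def cal3_def cb1_def cb2_def cg_def
lemmas ddefs = d_a1_def d_a2_def d_a3_def d_a4_def d_al1_def d_al2_def d_al3_def d_b1_def d_b2_def d_g_def
lemmas fdefs = V1_def V2_def V3_def T1_def T2_def T3_def

definition dIt1 :: "pt \<Rightarrow> pt \<Rightarrow> real" where
  "dIt1 p h = cg p * h$5 + h$9 * cal2 p - 2 * (h$7 * cb2 p + cb1 p * h$8)"
definition dIt2 :: "pt \<Rightarrow> pt \<Rightarrow> real" where
  "dIt2 p h = h$9 * (cal1 p + cal3 p) + cg p * (h$4 + h$6) + 2 * cb2 p * h$8 - 2 * cb1 p * h$7"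
definition dIt3 :: "pt \<Rightarrow> pt \<Rightarrow> real" where
  "dIt3 p h = 2 * cg p * h$9 * (ca1 p - 3 * ca3 p) + (cg p)^2 * (h$0 - 3 * h$2)
     + 3 * h$9 * (cb2 p * cal2 p - cb1 p * (cal1 p + cal3 p))
     + 3 * cg p * (h$8 * cal2 p + cb2 p * h$5 - h$7 * (cal1 p + cal3 p) - cb1 p * (h$4 + h$6))
     + 2 * h$7 * ((cb1 p)^2 - 3 * (cb2 p)^2) + 2 * cb1 p * (2 * cb1 p * h$7 - 6 * cb2 p * h$8)"
definition dIt4 :: "pt \<Rightarrow> pt \<Rightarrow> real" where
  "dIt4 p h = 2 * cg p * h$9 * (3 * ca2 p - ca4 p) + (cg p)^2 * (3 * h$1 - h$3)
     - 3 * h$9 * (cb1 p * cal2 p + cb2 p * (cal1 p + cal3 p))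
     - 3 * cg p * (h$7 * cal2 p + cb1 p * h$5 + h$8 * (cal1 p + cal3 p) + cb2 p * (h$4 + h$6))
     + 2 * h$8 * (3 * (cb1 p)^2 - (cb2 p)^2) + 2 * cb2 p * (6 * cb1 p * h$7 - 2 * cb2 p * h$8)"

lemma It1_d: "(It1 has_derivative dIt1 p) (at p)"
  unfolding It1_def[abs_def] dIt1_def[abs_def] cdefs
  by ((rule derivative_eq_intros cd refl | simp)+, rule ext, simp add: algebra_simps)
lemma It2_d: "(It2 has_derivative dIt2 p) (at p)"
  unfolding It2_def[abs_def] dIt2_def[abs_def] cdefs
  by ((rule derivative_eq_intros cd refl | simp)+, rule ext, simp add: algebra_simps)
lemma It3_d: "(It3 has_derivative dIt3 p) (at p)"
  unfolding It3_def[abs_def] dIt3_def[abs_def] cdefs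
  by ((rule derivative_eq_intros cd refl | simp)+, rule ext, simp add: algebra_simps power2_eq_square)
lemma It4_d: "(It4 has_derivative dIt4 p) (at p)"
  unfolding It4_def[abs_def] dIt4_def[abs_def] cdefs
  by ((rule derivative_eq_intros cd refl | simp)+, rule ext, simp add: algebra_simps power2_eq_square)
lemma cg_d: "(cg has_derivative (\<lambda>h. h$9)) (at p)"
  unfolding cg_def[abs_def] by (rule cd)

lemma vals:
  "dIt1 p (T1 p) = 0" "dIt1 p (T2 p) = 0" "dIt1 p (T3 p) = 0" "dIt1 p (V1 p) = 0" "dIt1 p (V2 p) = 0"
  "dIt2 p (T1 p) = 0" "dIt2 p (T2 p) = 0" "dIt2 p (T3 p) = 0" "dIt2 p (V1 p) = 0" "dIt2 p (V2 p) = 0"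
  "dIt3 p (T1 p) = 0" "dIt3 p (T2 p) = 0" "dIt3 p (T3 p) = 0" "dIt3 p (V1 p) = 0" "dIt3 p (V2 p) = 0"
  "dIt4 p (T1 p) = 0" "dIt4 p (T2 p) = 0" "dIt4 p (T3 p) = 0" "dIt4 p (V1 p) = 0" "dIt4 p (V2 p) = 0"
  "dIt1 p (V3 p) = - 2 * It2 p" "dIt2 p (V3 p) = 2 * It1 p"
  "dIt3 p (V3 p) = 3 * It4 p" "dIt4 p (V3 p) = - 3 * It3 p"
  unfolding dIt1_def dIt2_def dIt3_def dIt4_def It1_def It2_def It3_def It4_def fdefs ddefs cdefs
  by (simp_all add: axis_def algebra_simps power2_eq_square)

lemma ann_It:
  "X \<in> {T1, T2, T3, V1, V2} \<Longrightarrow> annihilates X It1"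
  "X \<in> {T1, T2, T3, V1, V2} \<Longrightarrow> annihilates X It2"
  "X \<in> {T1, T2, T3, V1, V2} \<Longrightarrow> annihilates X It3"
  "X \<in> {T1, T2, T3, V1, V2} \<Longrightarrow> annihilates X It4"
  unfolding annihilates_def
  by (auto intro!: exI It1_d It2_d It3_d It4_d simp: vals)

lemma ann_cg: "X \<in> {T1, T2, T3, V1, V2, V3} \<Longrightarrow> annihilates X cg"
  unfolding annihilates_def
  by (auto intro!: exI cg_d simp: fdefs ddefs axis_def)

lemma ann_I2: "X \<in> {V1, V2, V3, T1, T2, T3} \<Longrightarrow> annihilates X I2"
  unfolding annihilates_def I2_def[abs_def]
  apply (intro allI exI conjI)
   apply (rule derivative_eq_intros It1_d It2_d refl)+
  apply (auto simp: vals algebra_simps)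
  done

lemma ann_I3: "X \<in> {V1, V2, V3, T1, T2, T3} \<Longrightarrow> annihilates X I3"
  unfolding annihilates_def I3_def[abs_def]
  apply (intro allI exI conjI)
   apply (rule derivative_eq_intros It3_d It4_d refl)+
  apply (auto simp: vals algebra_simps)
  done

lemma ann_I1: "X \<in> {V1, V2, V3, T1, T2, T3} \<Longrightarrow> annihilates X I1"
  unfolding annihilates_def I1_def[abs_def]
  apply (intro allI exI conjI)
   apply (rule derivative_eq_intros It1_d It2_d It3_d It4_d refl)+
  apply (auto simp: vals algebra_simps power2_eq_square power3_eq_cube)
  done

lemma ann_I4: "X \<in> {V1, V2, V3, T1, T2, T3} \<Longrightarrow> annihilates X I4"
  using ann_cg[of X] unfolding I4_def[abs_def] cg_def[abs_def] by auto

lemma pf_const[intro]: "poly_fun (\<lambda>p. c)" by (rule poly_fun.const)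
lemma pf_coord[intro]: "poly_fun (\<lambda>p. p $ i)" by (rule poly_fun.coord)
lemma pf_add[intro]: "poly_fun f \<Longrightarrow> poly_fun g \<Longrightarrow> poly_fun (\<lambda>p. f p + g p)" by (rule poly_fun.add)
lemma pf_mult[intro]: "poly_fun f \<Longrightarrow> poly_fun g \<Longrightarrow> poly_fun (\<lambda>p. f p * g p)" by (rule poly_fun.mult)
lemma pf_diff[intro]: "poly_fun f \<Longrightarrow> poly_fun g \<Longrightarrow> poly_fun (\<lambda>p. f p - g p)"
proof -
  assume "poly_fun f" "poly_fun g"
  then have "poly_fun (\<lambda>p. f p + (\<lambda>p. -1) p * g p)" by (intro poly_fun.add poly_fun.mult poly_fun.const)
  then show ?thesis by simp
qed
lemma pf_pow[intro]: "poly_fun f \<Longrightarrow> poly_fun (\<lambda>p. f p ^ n)"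
  by (induction n) (auto intro: poly_fun.mult[where f=f, simplified] poly_fun.const)

lemma pf_It: "poly_fun It1" "poly_fun It2" "poly_fun It3" "poly_fun It4" "poly_fun cg"
  unfolding It1_def[abs_def] It2_def[abs_def] It3_def[abs_def] It4_def[abs_def] cdefs
  by (intro pf_add pf_mult pf_diff pf_pow pf_const pf_coord)+

lemma pf_I1: "poly_fun I1"
  unfolding I1_def[abs_def] using pf_It by (intro pf_add pf_mult pf_diff pf_pow pf_const | assumption)+

lemma pf_I2: "poly_fun I2"
  unfolding I2_def[abs_def] using pf_It by (intro pf_add pf_mult pf_diff pf_pow pf_const | assumption)+

lemma pf_I3: "poly_fun I3"
  unfolding I3_def[abs_def] using pf_It by (intro pf_add pf_mult pf_diff pf_pow pf_const | assumption)+

lemma pf_I4: "poly_fun I4"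
  unfolding I4_def[abs_def] using pf_It by simp

lemmas pf_I = pf_I1 pf_I2 pf_I3 pf_I4

lemma hom_It: "It1 (t *\<^sub>R p) = t^2 * It1 p" "It2 (t *\<^sub>R p) = t^2 * It2 p"
   "It3 (t *\<^sub>R p) = t^3 * It3 p" "It4 (t *\<^sub>R p) = t^3 * It4 p" "cg (t *\<^sub>R p) = t * cg p"
  unfolding It1_def It2_def It3_def It4_def cdefs
  by (simp_all add: algebra_simps power2_eq_square power3_eq_cube)

lemma hom_I: "homogeneous I1" "homogeneous I2" "homogeneous I3" "homogeneous I4"
  unfolding homogeneous_def
    apply (rule exI[of _ 12]) apply (intro allI) apply (simp only: I1_def hom_It) apply algebra
   apply (rule exI[of _ 4]) apply (intro allI) apply (simp only: I2_def hom_It) apply algebra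
   apply (rule exI[of _ 6]) apply (intro allI) apply (simp only: I3_def hom_It) apply algebra
  apply (rule exI[of _ 1]) apply (simp add: I4_def hom_It)
  done

theorem mainTheorem4:
  shows "(\<forall>f \<in> {It1, It2, It3, It4, cg}. \<forall>X \<in> {T1, T2, T3, V1, V2}. annihilates X f)
       \<and> (\<forall>f \<in> {I1, I2, I3, I4}. poly_fun f \<and> homogeneous f
             \<and> (\<forall>X \<in> {V1, V2, V3, T1, T2, T3}. annihilates X f))"
  using ann_It ann_cg ann_I1 ann_I2 ann_I3 ann_I4 pf_I hom_I by auto
end
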